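(* Let $G$ be a finite group whose Sylow $2$-subgroups are isomorphic to $D_{2n}$ for some integer $n\ge 2$, and let $H$ be a $2$-subgroup of $G$. Then $H$ is not a perfect code of $G$ if and only if there exists a cyclic $2$-subgroup $C$ of $G$ such that $1<H<C$.
   Context: $D_{2n}$ denotes the dihedral group of order $2n$, with $D_4=C_2\times C_2$. For a group $G$ with identity $e$ and an inverse-closed subset $S\subseteq G\setminus\{e\}$, the Cayley graph $\mathrm{Cay}(G,S)$ has vertex set $G$ and edges $\{g,sg\}$ for $s\in S$, $g\in G$. A perfect code in a graph is an independent set $C$ of vertices such that every vertex outside $C$ is adjacent to exactly one vertex of $C$. A subgroup $H$ of $G$ is a perfect code of $G$ if some Cayley graph of $G$ admits $H$ as a perfect code. *)

theory Defs
  imports "HOL-Algebra.Algebra"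
begin

text \<open>The element (i, False) stands for r^i and
  (i, True) for r^i s, where r has order n, s has order 2 and s r s = r^-1.
  For n = 2 this is C2 x C2, matching the convention D_4 = C2 x C2.\<close>
definition dihedral_group :: "nat \<Rightarrow> (nat \<times> bool) monoid" where
  "dihedral_group n =
     \<lparr> carrier = {0..<n} \<times> UNIV,
       monoid.mult = (\<lambda>(i, e) (j, f). ((if e then i + n - j else i + j) mod n, e \<noteq> f)),
       monoid.one = (0, False) \<rparr>"

definition is_p_subgroup :: "nat \<Rightarrow> ('a, 'b) monoid_scheme \<Rightarrow> 'a set \<Rightarrow> bool" where
  "is_p_subgroup p G H \<longleftrightarrow> subgroup H G \<and> (\<exists>k. card H = p ^ k)"

definition is_sylow_subgroup :: "nat \<Rightarrow> ('a, 'b) monoid_scheme \<Rightarrow> 'a set \<Rightarrow> bool" where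
  "is_sylow_subgroup p G P \<longleftrightarrow> subgroup P G \<and>
     (\<exists>k. card P = p ^ k \<and> p ^ k dvd order G \<and> \<not> p ^ Suc k dvd order G)"

definition cayley_adj :: "('a, 'b) monoid_scheme \<Rightarrow> 'a set \<Rightarrow> 'a \<Rightarrow> 'a \<Rightarrow> bool" where
  "cayley_adj G S g h \<longleftrightarrow> g \<in> carrier G \<and> h \<in> carrier G \<and> (\<exists>s\<in>S. h = s \<otimes>\<^bsub>G\<^esub> g)"

definition perfect_code_in_cayley :: "('a, 'b) monoid_scheme \<Rightarrow> 'a set \<Rightarrow> 'a set \<Rightarrow> bool" where
  "perfect_code_in_cayley G S C \<longleftrightarrow> C \<subseteq> carrier G \<and>
     (\<forall>x\<in>C. \<forall>y\<in>C. \<not> cayley_adj G S x y) \<and>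
     (\<forall>v\<in>carrier G - C. \<exists>!c. c \<in> C \<and> cayley_adj G S v c)"

definition subgroup_perfect_code :: "('a, 'b) monoid_scheme \<Rightarrow> 'a set \<Rightarrow> bool" where
  "subgroup_perfect_code G H \<longleftrightarrow>
     (\<exists>S. S \<subseteq> carrier G - {\<one>\<^bsub>G\<^esub>} \<and> (\<forall>s\<in>S. inv\<^bsub>G\<^esub> s \<in> S) \<and>
          perfect_code_in_cayley G S H)"

end

theory Submission
  imports Defs
begin

lemma (in group) my_cancel1 [simp]:
  "x \<in> carrier G \<Longrightarrow> y \<in> carrier G \<Longrightarrow> x \<otimes> (inv x \<otimes> y) = y"
  by (metis inv_closed m_assoc r_inv l_one)

lemma (in group) my_cancel2 [simp]:
  "x \<in> carrier G \<Longrightarrow> y \<in> carrier G \<Longrightarrow> inv x \<otimes> (x \<otimes> y) = y"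
  by (metis inv_closed m_assoc l_inv l_one)

lemma (in group) orbit_card:
  assumes Q: "subgroup Q G"
    and cl: "\<And>q y. q \<in> Q \<Longrightarrow> y \<in> Xs \<Longrightarrow> act q y \<in> Xs"
    and one: "\<And>y. y \<in> Xs \<Longrightarrow> act \<one> y = y"
    and comp: "\<And>q1 q2 y. q1 \<in> Q \<Longrightarrow> q2 \<in> Q \<Longrightarrow> y \<in> Xs \<Longrightarrow> act (q1 \<otimes> q2) y = act q1 (act q2 y)"
    and y: "y \<in> Xs" and fQ: "finite Q"
  shows "card ((\<lambda>q. act q y) ` Q) * card {q\<in>Q. act q y = y} = card Q"
proof -
  let ?O = "(\<lambda>q. act q y) ` Q" and ?St = "{q\<in>Q. act q y = y}"
  define F where "F z = {q\<in>Q. act q y = z}" for z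
  have QG: "\<And>q. q \<in> Q \<Longrightarrow> q \<in> carrier G" using Q subgroup.subset by blast
  have fib: "F (act q0 y) = (\<lambda>s. q0 \<otimes> s) ` ?St" if q0: "q0 \<in> Q" for q0
  proof
    show "F (act q0 y) \<subseteq> (\<lambda>s. q0 \<otimes> s) ` ?St"
    proof
      fix q assume "q \<in> F (act q0 y)"
      hence q: "q \<in> Q" "act q y = act q0 y" by (auto simp: F_def)
      have iq: "inv q0 \<in> Q" by (rule subgroup.m_inv_closed[OF Q q0])
      have m: "inv q0 \<otimes> q \<in> Q" by (rule subgroup.m_closed[OF Q iq q(1)])
      have "act (inv q0 \<otimes> q) y = act (inv q0) (act q0 y)" using comp[OF iq q(1) y] q by simp
      also have "\<dots> = act (inv q0 \<otimes> q0) y" using comp[OF iq q0 y] by simp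
      also have "\<dots> = y" using one y QG q0 by simp
      finally have "inv q0 \<otimes> q \<in> ?St" using m by simp
      moreover have "q = q0 \<otimes> (inv q0 \<otimes> q)" using QG q0 q(1) by (metis m_assoc r_inv l_one inv_closed)
      ultimately show "q \<in> (\<lambda>s. q0 \<otimes> s) ` ?St" by blast
    qed
    show "(\<lambda>s. q0 \<otimes> s) ` ?St \<subseteq> F (act q0 y)"
    proof (rule image_subsetI)
      fix s assume s: "s \<in> ?St"
      hence s1: "s \<in> Q" and s2: "act s y = y" by auto
      have "q0 \<otimes> s \<in> Q" by (rule subgroup.m_closed[OF Q q0 s1])
      moreover have "act (q0 \<otimes> s) y = act q0 y" using comp[OF q0 s1 y] s2 by simp
      ultimately show "q0 \<otimes> s \<in> F (act q0 y)" unfolding F_def by blast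
    qed
  qed
  have cardfib: "card (F z) = card ?St" if zO: "z \<in> ?O" for z
  proof -
    obtain q0 where q0: "q0 \<in> Q" "z = act q0 y" using zO by blast
    have "inj_on (\<lambda>s. q0 \<otimes> s) ?St" using QG q0 by (auto simp: inj_on_def)
    thus ?thesis using fib[OF q0(1)] q0 by (simp add: card_image)
  qed
  have injF: "inj_on F ?O"
  proof (rule inj_onI)
    fix z1 z2 assume "z1 \<in> ?O" "z2 \<in> ?O" "F z1 = F z2"
    then obtain q where "q \<in> Q" "z1 = act q y" by blast
    hence "q \<in> F z1" by (simp add: F_def)
    with \<open>F z1 = F z2\<close> have "q \<in> F z2" by simp
    thus "z1 = z2" using \<open>z1 = act q y\<close> by (simp add: F_def)
  qed
  have U: "\<Union>(F ` ?O) = Q" by (auto simp: F_def)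
  have "card ?St * card (F ` ?O) = card (\<Union>(F ` ?O))"
  proof (rule card_partition)
    show "finite (F ` ?O)" using fQ by simp
    show "finite (\<Union>(F ` ?O))" using U fQ by simp
    show "\<And>c. c \<in> F ` ?O \<Longrightarrow> card c = card ?St" using cardfib by blast
    show "\<And>c1 c2. c1 \<in> F ` ?O \<Longrightarrow> c2 \<in> F ` ?O \<Longrightarrow> c1 \<noteq> c2 \<Longrightarrow> c1 \<inter> c2 = {}"
      by (auto simp: F_def)
  qed
  thus ?thesis using U card_image[OF injF] by (simp add: mult.commute)
qed

lemma (in group) fixed_point_2group:
  assumes Q: "subgroup Q G" "card Q = 2 ^ a"
    and cl: "\<And>q y. q \<in> Q \<Longrightarrow> y \<in> Xs \<Longrightarrow> act q y \<in> Xs"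
    and one: "\<And>y. y \<in> Xs \<Longrightarrow> act \<one> y = y"
    and comp: "\<And>q1 q2 y. q1 \<in> Q \<Longrightarrow> q2 \<in> Q \<Longrightarrow> y \<in> Xs \<Longrightarrow> act (q1 \<otimes> q2) y = act q1 (act q2 y)"
    and fX: "finite Xs" and odd: "odd (card Xs)"
  shows "\<exists>y\<in>Xs. \<forall>q\<in>Q. act q y = y"
proof -
  have fQ: "finite Q" using Q(2) by (metis card.infinite power_not_zero zero_neq_numeral)
  have QG: "\<And>q. q \<in> Q \<Longrightarrow> q \<in> carrier G" using subgroup.subset[OF Q(1)] by blast
  have Qm: "\<And>a b. a \<in> Q \<Longrightarrow> b \<in> Q \<Longrightarrow> a \<otimes> b \<in> Q" by (rule subgroup.m_closed[OF Q(1)])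
  have Qi: "\<And>a. a \<in> Q \<Longrightarrow> inv a \<in> Q" by (rule subgroup.m_inv_closed[OF Q(1)])
  have Q1: "\<one> \<in> Q" by (rule subgroup.one_closed[OF Q(1)])
  have "Y \<subseteq> Xs \<longrightarrow> (\<forall>q\<in>Q. \<forall>y\<in>Y. act q y \<in> Y) \<longrightarrow> odd (card Y) \<longrightarrow> (\<exists>y\<in>Y. \<forall>q\<in>Q. act q y = y)"
    if "finite Y" for Y
    using that
  proof (induction Y rule: finite_psubset_induct)
    case (psubset Y)
    show ?case
    proof (intro impI)
      assume YX: "Y \<subseteq> Xs" and inv: "\<forall>q\<in>Q. \<forall>y\<in>Y. act q y \<in> Y" and oddY: "odd (card Y)"
      have "Y \<noteq> {}" using oddY by auto
      then obtain y where y: "y \<in> Y" by blast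
      let ?O = "(\<lambda>q. act q y) ` Q"
      have OY: "?O \<subseteq> Y" using inv y by blast
      have oc: "card ?O * card {q\<in>Q. act q y = y} = card Q"
      proof (rule orbit_card[OF Q(1), of Y act])
        show "\<And>q y. q \<in> Q \<Longrightarrow> y \<in> Y \<Longrightarrow> act q y \<in> Y" using inv by blast
        show "\<And>y. y \<in> Y \<Longrightarrow> act \<one> y = y" using one YX by blast
        show "\<And>q1 q2 y. q1 \<in> Q \<Longrightarrow> q2 \<in> Q \<Longrightarrow> y \<in> Y \<Longrightarrow> act (q1 \<otimes> q2) y = act q1 (act q2 y)"
          using comp YX by blast
      qed (use y fQ in auto)
      hence "card ?O dvd 2 ^ a" using Q(2) by (metis dvd_triv_left)
      then obtain e where e: "card ?O = 2 ^ e" by (auto simp: divides_primepow_nat)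
      have yX: "y \<in> Xs" using y YX by blast
      have "act \<one> y = y" using one[OF yX] .
      hence yO: "y \<in> ?O" using Q1 by (metis image_eqI)
      show "\<exists>y\<in>Y. \<forall>q\<in>Q. act q y = y"
      proof (cases "e = 0")
        case True
        hence "card ?O = 1" using e by simp
        then obtain z where z: "?O = {z}" by (rule card_1_singletonE)
        have "y = z" using yO z by simp
        hence "?O = {y}" using z by simp
        thus ?thesis using y by blast
      next
        case False
        hence evO: "even (card ?O)" using e by simp
        have sub: "Y - ?O \<subset> Y" using y yO by blast
        have inv2: "\<forall>q\<in>Q. \<forall>z\<in>Y - ?O. act q z \<in> Y - ?O"
        proof (intro ballI)
          fix q z assume q: "q \<in> Q" and z: "z \<in> Y - ?O"
          have "act q z \<in> Y" using inv q z by blast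
          moreover have "act q z \<notin> ?O"
          proof
            assume "act q z \<in> ?O"
            then obtain q' where q': "q' \<in> Q" "act q z = act q' y" by blast
            have iq: "inv q \<in> Q" using Qi q by blast
            have zX: "z \<in> Xs" using z YX by blast
            have "z = act (inv q \<otimes> q) z" using one[OF zX] QG[OF q] by simp
            also have "\<dots> = act (inv q) (act q z)" by (rule comp[OF iq q zX])
            also have "\<dots> = act (inv q \<otimes> q') y" by (simp add: q'(2) comp[OF iq q'(1) yX])
            finally have "z \<in> ?O" using Qm[OF iq q'(1)] by blast
            thus False using z by blast
          qed
          ultimately show "act q z \<in> Y - ?O" by blast
        qed
        have "card (Y - ?O) = card Y - card ?O"
          using OY psubset.hyps(1) by (simp add: card_Diff_subset finite_subset)
        moreover have "card ?O \<le> card Y" using OY psubset.hyps(1) by (simp add: card_mono)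
        ultimately have "odd (card (Y - ?O))" using oddY evO by auto
        hence "\<exists>y\<in>Y - ?O. \<forall>q\<in>Q. act q y = y" using psubset.IH[OF sub] YX inv2 by blast
        thus ?thesis by blast
      qed
    qed
  qed
  thus ?thesis using fX odd cl by blast
qed

lemma (in group) sylow_contains:
  assumes fin: "finite (carrier G)" and Q: "subgroup Q G" "card Q = 2 ^ a"
    and P: "subgroup P G" "card P = 2 ^ k" "\<not> 2 ^ Suc k dvd order G"
  shows "\<exists>P'. subgroup P' G \<and> card P' = card P \<and> Q \<subseteq> P'"
proof -
  have PG: "P \<subseteq> carrier G" using subgroup.subset[OF P(1)] .
  have QG: "Q \<subseteq> carrier G" using subgroup.subset[OF Q(1)] .
  have Qi: "\<And>a. a \<in> Q \<Longrightarrow> inv a \<in> Q" by (rule subgroup.m_inv_closed[OF Q(1)])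
  have Pm: "\<And>a b. a \<in> P \<Longrightarrow> b \<in> P \<Longrightarrow> a \<otimes> b \<in> P" by (rule subgroup.m_closed[OF P(1)])
  have Pi: "\<And>a. a \<in> P \<Longrightarrow> inv a \<in> P" by (rule subgroup.m_inv_closed[OF P(1)])
  have P1: "\<one> \<in> P" by (rule subgroup.one_closed[OF P(1)])
  have rc: "\<And>S. S \<in> rcosets P \<Longrightarrow> \<exists>x\<in>carrier G. S = P #> x" unfolding RCOSETS_def by blast
  have fp: "\<exists>S\<in>rcosets P. \<forall>q\<in>Q. (\<lambda>q S. S #> inv q) q S = S"
  proof (rule fixed_point_2group[OF Q])
    fix q S assume q: "q \<in> Q" and S: "S \<in> rcosets P"
    obtain x where x: "x \<in> carrier G" "S = P #> x" using rc[OF S] by blast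
    have "S #> inv q = P #> (x \<otimes> inv q)" using x q QG PG by (simp add: coset_mult_assoc subsetD)
    thus "S #> inv q \<in> rcosets P" using x q QG PG by (simp add: rcosetsI subsetD)
  next
    fix S assume S: "S \<in> rcosets P"
    obtain x where x: "x \<in> carrier G" "S = P #> x" using rc[OF S] by blast
    have "S \<subseteq> carrier G" using x PG by (simp add: r_coset_subset_G)
    thus "S #> inv \<one> = S" by (simp add: coset_mult_one)
  next
    fix q1 q2 S assume q: "q1 \<in> Q" "q2 \<in> Q" and S: "S \<in> rcosets P"
    obtain x where x: "x \<in> carrier G" "S = P #> x" using rc[OF S] by blast
    have SG: "S \<subseteq> carrier G" using x PG by (simp add: r_coset_subset_G)
    have c: "q1 \<in> carrier G" "q2 \<in> carrier G" using q QG by auto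
    show "S #> inv (q1 \<otimes> q2) = S #> inv q2 #> inv q1"
      using SG c by (simp add: coset_mult_assoc inv_mult_group)
  next
    show "finite (rcosets P)"
      using fin rcosets_part_G[OF P(1)] by (metis finite_UnionD)
  next
    have l: "card (rcosets P) * card P = order G" by (rule lagrange[OF P(1)])
    show "odd (card (rcosets P))"
    proof
      assume "even (card (rcosets P))"
      then obtain m where "card (rcosets P) = 2 * m" by blast
      hence "order G = 2 ^ Suc k * m" using l P(2) by (simp add: mult_ac)
      thus False using P(3) by simp
    qed
  qed
  then obtain S where S: "S \<in> rcosets P" "\<forall>q\<in>Q. S #> inv q = S" by auto
  obtain x where x: "x \<in> carrier G" "S = P #> x" using rc[OF S(1)] by blast
  define P' where "P' = (\<lambda>p. inv x \<otimes> p \<otimes> x) ` P"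
  have P'G: "P' \<subseteq> carrier G" unfolding P'_def using PG x by auto
  have "subgroup P' G"
  proof (rule subgroupI)
    show "P' \<subseteq> carrier G" by (rule P'G)
    show "P' \<noteq> {}" unfolding P'_def using P1 by blast
  next
    fix a assume "a \<in> P'"
    then obtain p where p: "p \<in> P" "a = inv x \<otimes> p \<otimes> x" unfolding P'_def by blast
    have pc: "p \<in> carrier G" using p PG by auto
    have "inv a = inv x \<otimes> inv p \<otimes> x" using p pc x by (simp add: inv_mult_group m_assoc)
    thus "inv a \<in> P'" unfolding P'_def using Pi[OF p(1)] by blast
  next
    fix a b assume "a \<in> P'" "b \<in> P'"
    then obtain p p' where p: "p \<in> P" "a = inv x \<otimes> p \<otimes> x" and p': "p' \<in> P" "b = inv x \<otimes> p' \<otimes> x"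
      unfolding P'_def by blast
    have pc: "p \<in> carrier G" "p' \<in> carrier G" using p p' PG by auto
    have "a \<otimes> b = inv x \<otimes> (p \<otimes> p') \<otimes> x" using p p' pc x
      by (simp add: m_assoc)
    thus "a \<otimes> b \<in> P'" unfolding P'_def using Pm[OF p(1) p'(1)] by blast
  qed
  moreover have "card P' = card P"
  proof -
    have "inj_on (\<lambda>p. inv x \<otimes> p \<otimes> x) P"
      using PG x by (auto simp: inj_on_def subsetD)
    thus ?thesis unfolding P'_def by (simp add: card_image)
  qed
  moreover have "Q \<subseteq> P'"
  proof
    fix q assume q: "q \<in> Q"
    have qc: "q \<in> carrier G" using q QG by auto
    have "S #> inv (inv q) = S" using S(2) Qi[OF q] by blast
    hence e: "P #> (x \<otimes> q) = P #> x" using x qc PG by (simp add: coset_mult_assoc)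
    have "x \<otimes> q \<in> P #> (x \<otimes> q)" using x qc P(1) by (simp add: rcos_self)
    hence "x \<otimes> q \<in> P #> x" using e by simp
    then obtain p where p: "p \<in> P" "x \<otimes> q = p \<otimes> x" unfolding r_coset_def by blast
    have pc: "p \<in> carrier G" using p PG by auto
    have "q = inv x \<otimes> (x \<otimes> q)" using x qc by simp
    also have "\<dots> = inv x \<otimes> p \<otimes> x" using p pc x by (simp add: m_assoc)
    finally show "q \<in> P'" unfolding P'_def using p(1) by blast
  qed
  ultimately show ?thesis by blast
qed

definition dcos :: "('a, 'b) monoid_scheme \<Rightarrow> 'a set \<Rightarrow> 'a \<Rightarrow> 'a set" where
  "dcos G H x = {h1 \<otimes>\<^bsub>G\<^esub> x \<otimes>\<^bsub>G\<^esub> h2 | h1 h2. h1 \<in> H \<and> h2 \<in> H}"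

context group
begin

context
  fixes H assumes H: "subgroup H G"
begin

lemma Hc: "h \<in> H \<Longrightarrow> h \<in> carrier G"
  using subgroup.subset[OF H] by blast

lemma Hm: "a \<in> H \<Longrightarrow> b \<in> H \<Longrightarrow> a \<otimes> b \<in> H"
  by (rule subgroup.m_closed[OF H])

lemma Hi: "a \<in> H \<Longrightarrow> inv a \<in> H"
  by (rule subgroup.m_inv_closed[OF H])

lemma H1: "\<one> \<in> H"
  by (rule subgroup.one_closed[OF H])

lemma dc_mem: "h1 \<in> H \<Longrightarrow> h2 \<in> H \<Longrightarrow> h1 \<otimes> x \<otimes> h2 \<in> dcos G H x"
  unfolding dcos_def by blast

lemma dc_E: "y \<in> dcos G H x \<Longrightarrow> \<exists>h1\<in>H. \<exists>h2\<in>H. y = h1 \<otimes> x \<otimes> h2"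
  unfolding dcos_def by blast

lemma dc_sub: "x \<in> carrier G \<Longrightarrow> dcos G H x \<subseteq> carrier G"
  unfolding dcos_def using Hc by auto

lemma dc_self: "x \<in> carrier G \<Longrightarrow> x \<in> dcos G H x"
  using dc_mem[OF H1 H1, of x] by simp

lemma dc_eq:
  assumes x: "x \<in> carrier G" and y: "y \<in> dcos G H x"
  shows "dcos G H y = dcos G H x"
proof -
  obtain a b where ab: "a \<in> H" "b \<in> H" "y = a \<otimes> x \<otimes> b" using dc_E[OF y] by blast
  have ac: "a \<in> carrier G" "b \<in> carrier G" using ab Hc by auto
  show ?thesis
  proof
    show "dcos G H y \<subseteq> dcos G H x"
    proof
      fix z assume "z \<in> dcos G H y"
      then obtain c d where cd: "c \<in> H" "d \<in> H" "z = c \<otimes> y \<otimes> d" using dc_E by blast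
      have cc: "c \<in> carrier G" "d \<in> carrier G" using cd Hc by auto
      have "z = (c \<otimes> a) \<otimes> x \<otimes> (b \<otimes> d)" using cd ab ac cc x by (simp add: m_assoc)
      thus "z \<in> dcos G H x" using dc_mem[OF Hm[OF cd(1) ab(1)] Hm[OF ab(2) cd(2)]] by simp
    qed
    show "dcos G H x \<subseteq> dcos G H y"
    proof
      fix z assume "z \<in> dcos G H x"
      then obtain c d where cd: "c \<in> H" "d \<in> H" "z = c \<otimes> x \<otimes> d" using dc_E by blast
      have cc: "c \<in> carrier G" "d \<in> carrier G" using cd Hc by auto
      have "z = (c \<otimes> inv a) \<otimes> y \<otimes> (inv b \<otimes> d)" using cd ab ac cc x by (simp add: m_assoc)
      thus "z \<in> dcos G H y" using dc_mem[OF Hm[OF cd(1) Hi[OF ab(1)]] Hm[OF Hi[OF ab(2)] cd(2)]] by simp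
    qed
  qed
qed

lemma dc_inv:
  assumes x: "x \<in> carrier G" and y: "y \<in> dcos G H x"
  shows "inv y \<in> dcos G H (inv x)"
proof -
  obtain a b where ab: "a \<in> H" "b \<in> H" "y = a \<otimes> x \<otimes> b" using dc_E[OF y] by blast
  have ac: "a \<in> carrier G" "b \<in> carrier G" using ab Hc by auto
  have "inv y = inv b \<otimes> inv x \<otimes> inv a" using ab ac x by (simp add: inv_mult_group m_assoc)
  thus ?thesis using dc_mem[OF Hi[OF ab(2)] Hi[OF ab(1)]] by simp
qed

lemma dc_rcos:
  assumes x: "x \<in> carrier G" and y: "y \<in> dcos G H x"
  shows "H #> y \<subseteq> dcos G H x"
proof
  fix z assume "z \<in> H #> y"
  then obtain h where h: "h \<in> H" "z = h \<otimes> y" unfolding r_coset_def by blast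
  obtain a b where ab: "a \<in> H" "b \<in> H" "y = a \<otimes> x \<otimes> b" using dc_E[OF y] by blast
  have ac: "a \<in> carrier G" "b \<in> carrier G" "h \<in> carrier G" using ab h Hc by auto
  have "z = (h \<otimes> a) \<otimes> x \<otimes> b" using h ab ac x by (simp add: m_assoc)
  thus "z \<in> dcos G H x" using dc_mem[OF Hm[OF h(1) ab(1)] ab(2)] by simp
qed

lemma dc_notH:
  assumes x: "x \<in> carrier G" "x \<notin> H"
  shows "dcos G H x \<inter> H = {}"
proof (rule ccontr)
  assume "dcos G H x \<inter> H \<noteq> {}"
  then obtain y where y: "y \<in> dcos G H x" "y \<in> H" by blast
  obtain a b where ab: "a \<in> H" "b \<in> H" "y = a \<otimes> x \<otimes> b" using dc_E[OF y(1)] by blast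
  have ac: "a \<in> carrier G" "b \<in> carrier G" using ab Hc by auto
  have "x = inv a \<otimes> y \<otimes> inv b" using ab ac x by (simp add: m_assoc)
  moreover have "inv a \<otimes> y \<otimes> inv b \<in> H" using Hm[OF Hm[OF Hi[OF ab(1)] y(2)] Hi[OF ab(2)]] .
  ultimately show False using x(2) by simp
qed

lemma dc_match:
  assumes x: "x \<in> carrier G" and y: "y \<in> dcos G H x" and z: "z \<in> dcos G H (inv x)"
  shows "\<exists>w \<in> H #> y. inv w \<in> H #> z"
proof -
  obtain a b where ab: "a \<in> H" "b \<in> H" "y = a \<otimes> x \<otimes> b" using dc_E[OF y] by blast
  obtain a' b' where ab': "a' \<in> H" "b' \<in> H" "z = a' \<otimes> inv x \<otimes> b'" using dc_E[OF z] by blast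
  have ac: "a \<in> carrier G" "b \<in> carrier G" "a' \<in> carrier G" "b' \<in> carrier G" using ab ab' Hc by auto
  define w where "w = inv b' \<otimes> x \<otimes> b"
  have yc: "y \<in> carrier G" "z \<in> carrier G" using ab ab' ac x by auto
  have "w = (inv b' \<otimes> inv a) \<otimes> y" using ab ac x by (simp add: w_def m_assoc)
  hence "w \<in> H #> y" using rcosI[OF Hm[OF Hi[OF ab'(2)] Hi[OF ab(1)]] _ yc(1)] subgroup.subset[OF H] by simp
  moreover have "inv w = (inv b \<otimes> inv a') \<otimes> z" using ab' ac x by (simp add: w_def m_assoc inv_mult_group)
  hence "inv w \<in> H #> z" using rcosI[OF Hm[OF Hi[OF ab(2)] Hi[OF ab'(1)]] _ yc(2)] subgroup.subset[OF H] by simp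
  ultimately show ?thesis by blast
qed

lemma rcos_disj:
  assumes "y \<in> carrier G" "z \<in> carrier G" "H #> y \<noteq> H #> z"
  shows "(H #> y) \<inter> (H #> z) = {}"
proof -
  have "pairwise disjnt (rcosets H)" by (rule rcos_disjoint[OF H])
  moreover have "H #> y \<in> rcosets H" "H #> z \<in> rcosets H"
    using assms subgroup.subset[OF H] by (auto intro: rcosetsI)
  ultimately show ?thesis using assms(3) unfolding pairwise_def disjnt_def by blast
qed

lemma card_dc:
  assumes fin: "finite (carrier G)" and x: "x \<in> carrier G"
  shows "card (dcos G H x) = card H * card ((\<lambda>y. H #> y) ` dcos G H x)"
proof -
  let ?C = "(\<lambda>y. H #> y) ` dcos G H x"
  have U: "\<Union>?C = dcos G H x"
  proof
    show "\<Union>?C \<subseteq> dcos G H x" using dc_rcos[OF x] by blast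
    show "dcos G H x \<subseteq> \<Union>?C"
    proof
      fix y assume y: "y \<in> dcos G H x"
      have "y \<in> H #> y" using rcos_self[OF _ H] dc_sub[OF x] y by blast
      thus "y \<in> \<Union>?C" using y by blast
    qed
  qed
  have "card H * card ?C = card (\<Union>?C)"
  proof (rule card_partition)
    show "finite ?C" using finite_subset[OF dc_sub[OF x] fin] by simp
    show "finite (\<Union>?C)" using U finite_subset[OF dc_sub[OF x] fin] by simp
    show "\<And>c. c \<in> ?C \<Longrightarrow> card c = card H"
    proof -
      fix c assume "c \<in> ?C"
      then obtain y where y: "y \<in> dcos G H x" "c = H #> y" by blast
      have "c \<in> rcosets H" using y dc_sub[OF x] subgroup.subset[OF H] by (auto intro: rcosetsI)
      thus "card c = card H" using card_rcosets_equal subgroup.subset[OF H] by metis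
    qed
    show "\<And>c1 c2. c1 \<in> ?C \<Longrightarrow> c2 \<in> ?C \<Longrightarrow> c1 \<noteq> c2 \<Longrightarrow> c1 \<inter> c2 = {}"
      using rcos_disj dc_sub[OF x] by blast
  qed
  thus ?thesis using U by simp
qed

lemma dc_Union:
  assumes x: "x \<in> carrier G"
  shows "\<Union>((\<lambda>y. H #> y) ` dcos G H x) = dcos G H x"
proof
  show "\<Union>((\<lambda>y. H #> y) ` dcos G H x) \<subseteq> dcos G H x" using dc_rcos[OF x] by blast
  show "dcos G H x \<subseteq> \<Union>((\<lambda>y. H #> y) ` dcos G H x)"
  proof
    fix y assume y: "y \<in> dcos G H x"
    have "y \<in> H #> y" using rcos_self[OF _ H] dc_sub[OF x] y by blast
    thus "y \<in> \<Union>((\<lambda>y. H #> y) ` dcos G H x)" using y by blast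
  qed
qed

lemma dc_orbit:
  assumes x: "x \<in> carrier G"
  shows "(\<lambda>y. H #> y) ` dcos G H x = (\<lambda>q. (H #> x) #> inv q) ` H"
proof
  show "(\<lambda>y. H #> y) ` dcos G H x \<subseteq> (\<lambda>q. (H #> x) #> inv q) ` H"
  proof
    fix c assume "c \<in> (\<lambda>y. H #> y) ` dcos G H x"
    then obtain y where y: "y \<in> dcos G H x" "c = H #> y" by blast
    obtain a b where ab: "a \<in> H" "b \<in> H" "y = a \<otimes> x \<otimes> b" using dc_E[OF y(1)] by blast
    have ac: "a \<in> carrier G" "b \<in> carrier G" using ab Hc by auto
    have "y = a \<otimes> (x \<otimes> b)" using ab ac x by (simp add: m_assoc)
    hence "y \<in> H #> (x \<otimes> b)" using rcosI[OF ab(1) subgroup.subset[OF H]] ac x by simp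
    hence "H #> (x \<otimes> b) = H #> y" using repr_independence[OF _ _ H] ac x by simp
    moreover have "H #> (x \<otimes> b) = (H #> x) #> inv (inv b)"
      using ac x subgroup.subset[OF H] by (simp add: coset_mult_assoc)
    ultimately show "c \<in> (\<lambda>q. (H #> x) #> inv q) ` H" using y(2) Hi[OF ab(2)] by auto
  qed
  show "(\<lambda>q. (H #> x) #> inv q) ` H \<subseteq> (\<lambda>y. H #> y) ` dcos G H x"
  proof
    fix c assume "c \<in> (\<lambda>q. (H #> x) #> inv q) ` H"
    then obtain q where q: "q \<in> H" "c = (H #> x) #> inv q" by blast
    have qc: "q \<in> carrier G" using q Hc by auto
    have "c = H #> (x \<otimes> inv q)" using q qc x subgroup.subset[OF H] by (simp add: coset_mult_assoc)
    moreover have "x \<otimes> inv q \<in> dcos G H x" using dc_mem[OF H1 Hi[OF q(1)], of x] x by simp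
    ultimately show "c \<in> (\<lambda>y. H #> y) ` dcos G H x" by blast
  qed
qed

lemma dc_card_dvd:
  assumes fin: "finite (carrier G)" and x: "x \<in> carrier G"
  shows "card ((\<lambda>y. H #> y) ` dcos G H x) dvd card H"
proof -
  have HG: "H \<subseteq> carrier G" using subgroup.subset[OF H] .
  have rc: "\<And>S. S \<in> rcosets H \<Longrightarrow> \<exists>x\<in>carrier G. S = H #> x" unfolding RCOSETS_def by blast
  have "card ((\<lambda>q. (\<lambda>q S. S #> inv q) q (H #> x)) ` H) * card {q\<in>H. (\<lambda>q S. S #> inv q) q (H #> x) = H #> x} = card H"
  proof (rule orbit_card[OF H, of "rcosets H" "\<lambda>q S. S #> inv q" "H #> x"])
    fix q S assume q: "q \<in> H" and S: "S \<in> rcosets H"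
    obtain z where z: "z \<in> carrier G" "S = H #> z" using rc[OF S] by blast
    have "S #> inv q = H #> (z \<otimes> inv q)" using z q HG by (simp add: coset_mult_assoc subsetD)
    thus "S #> inv q \<in> rcosets H" using z q HG by (simp add: rcosetsI subsetD)
  next
    fix S assume S: "S \<in> rcosets H"
    obtain z where z: "z \<in> carrier G" "S = H #> z" using rc[OF S] by blast
    have "S \<subseteq> carrier G" using z HG by (simp add: r_coset_subset_G)
    thus "S #> inv \<one> = S" by (simp add: coset_mult_one)
  next
    fix q1 q2 S assume q: "q1 \<in> H" "q2 \<in> H" and S: "S \<in> rcosets H"
    obtain z where z: "z \<in> carrier G" "S = H #> z" using rc[OF S] by blast
    have SG: "S \<subseteq> carrier G" using z HG by (simp add: r_coset_subset_G)
    have c: "q1 \<in> carrier G" "q2 \<in> carrier G" using q HG by auto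
    show "S #> inv (q1 \<otimes> q2) = S #> inv q2 #> inv q1"
      using SG c by (simp add: coset_mult_assoc inv_mult_group)
  next
    show "H #> x \<in> rcosets H" by (rule rcosetsI[OF HG x])
    show "finite H" using finite_subset[OF HG fin] .
  qed
  hence "card H = card ((\<lambda>q. (H #> x) #> inv q) ` H) * card {q\<in>H. (H #> x) #> inv q = H #> x}" by simp
  hence "card ((\<lambda>q. (H #> x) #> inv q) ` H) dvd card H" by (rule dvdI)
  thus ?thesis using dc_orbit[OF x] by simp
qed

lemma pair_transversal:
  assumes L: "L \<subseteq> (\<lambda>y. H #> y) ` carrier G" and L': "L' \<subseteq> (\<lambda>y. H #> y) ` carrier G"
    and disj: "L \<inter> L' = {}"
    and sig: "bij_betw \<sigma> L L'" and m: "\<And>c. c \<in> L \<Longrightarrow> \<exists>w\<in>c. inv w \<in> \<sigma> c"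
  shows "\<exists>T. T \<subseteq> \<Union>(L \<union> L') \<and> (\<forall>t\<in>T. inv t \<in> T) \<and> (\<forall>c\<in>L \<union> L'. \<exists>!t. t \<in> T \<and> t \<in> c)"
proof -
  define w where "w c = (SOME w. w \<in> c \<and> inv w \<in> \<sigma> c)" for c
  have w: "w c \<in> c \<and> inv (w c) \<in> \<sigma> c" if "c \<in> L" for c
    unfolding w_def using m[OF that] by (rule someI2_bex) blast
  have sL: "\<sigma> c \<in> L'" if "c \<in> L" for c by (rule bij_betw_apply[OF sig that])
  have csub: "c \<subseteq> carrier G" if cL: "c \<in> L \<union> L'" for c
  proof -
    obtain y where y: "y \<in> carrier G" "c = H #> y" using cL L L' by blast
    show ?thesis using r_coset_subset_G[OF subgroup.subset[OF H] y(1)] y(2) by simp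
  qed
  have dj: "c1 \<inter> c2 = {}" if cc: "c1 \<in> L \<union> L'" "c2 \<in> L \<union> L'" "c1 \<noteq> c2" for c1 c2
  proof -
    obtain y1 where y1: "y1 \<in> carrier G" "c1 = H #> y1" using cc(1) L L' by blast
    obtain y2 where y2: "y2 \<in> carrier G" "c2 = H #> y2" using cc(2) L L' by blast
    show ?thesis using rcos_disj[OF y1(1) y2(1)] cc(3) y1(2) y2(2) by simp
  qed
  have wc: "w c \<in> carrier G" if "c \<in> L" for c using w[OF that] csub that by blast
  define T where "T = w ` L \<union> (\<lambda>c. inv (w c)) ` L"
  have canon: "t = w c0" if "t \<in> T" "t \<in> c0" "c0 \<in> L" for t c0
  proof -
    from that(1) consider (a) c where "c \<in> L" "t = w c" | (b) c where "c \<in> L" "t = inv (w c)"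
      unfolding T_def by blast
    thus ?thesis
    proof cases
      case a
      have "t \<in> c" using w[OF a(1)] a(2) by simp
      hence "c = c0" using dj[of c c0] that a(1) by blast
      thus ?thesis using a by simp
    next
      case b
      have "t \<in> \<sigma> c" using w[OF b(1)] b(2) by simp
      hence "\<sigma> c = c0" using dj[of "\<sigma> c" c0] that sL[OF b(1)] by blast
      thus ?thesis using sL[OF b(1)] that(3) disj by blast
    qed
  qed
  have canon': "t = inv (w c)" if "t \<in> T" "t \<in> \<sigma> c" "c \<in> L" for t c
  proof -
    from that(1) consider (a) c' where "c' \<in> L" "t = w c'" | (b) c' where "c' \<in> L" "t = inv (w c')"
      unfolding T_def by blast
    thus ?thesis
    proof cases
      case a
      have "t \<in> c'" using w[OF a(1)] a(2) by simp
      hence "c' = \<sigma> c" using dj[of c' "\<sigma> c"] that a(1) sL[OF that(3)] by blast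
      thus ?thesis using sL[OF that(3)] a(1) disj by blast
    next
      case b
      have "t \<in> \<sigma> c'" using w[OF b(1)] b(2) by simp
      hence "\<sigma> c' = \<sigma> c" using dj[of "\<sigma> c'" "\<sigma> c"] that sL[OF b(1)] sL[OF that(3)] by blast
      hence "c' = c" using inj_onD[OF bij_betw_imp_inj_on[OF sig] _ b(1) that(3)] by blast
      thus ?thesis using b by simp
    qed
  qed
  show ?thesis
  proof (intro exI conjI ballI)
    show "T \<subseteq> \<Union>(L \<union> L')"
    proof
      fix t assume "t \<in> T"
      then consider (a) c where "c \<in> L" "t = w c" | (b) c where "c \<in> L" "t = inv (w c)"
        unfolding T_def by blast
      thus "t \<in> \<Union>(L \<union> L')"
      proof cases
        case a
        have "t \<in> c" using w[OF a(1)] a(2) by simp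
        thus ?thesis using a(1) by blast
      next
        case b
        have "t \<in> \<sigma> c" using w[OF b(1)] b(2) by simp
        thus ?thesis using sL[OF b(1)] by blast
      qed
    qed
  next
    fix t assume "t \<in> T"
    then consider (a) c where "c \<in> L" "t = w c" | (b) c where "c \<in> L" "t = inv (w c)"
      unfolding T_def by blast
    thus "inv t \<in> T"
    proof cases
      case a
      have "inv (w c) \<in> T" unfolding T_def using a(1) by blast
      thus ?thesis using a(2) by simp
    next
      case b
      have "w c \<in> T" unfolding T_def using b(1) by blast
      thus ?thesis using b(2) wc[OF b(1)] by simp
    qed
  next
    fix c0 assume c0: "c0 \<in> L \<union> L'"
    show "\<exists>!t. t \<in> T \<and> t \<in> c0"
    proof (cases "c0 \<in> L")
      case True
      show ?thesis
      proof (rule ex1I[of _ "w c0"])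
        have "w c0 \<in> T" unfolding T_def using True by blast
        thus "w c0 \<in> T \<and> w c0 \<in> c0" using w[OF True] by simp
        fix t assume "t \<in> T \<and> t \<in> c0"
        thus "t = w c0" using canon[of t c0] True by simp
      qed
    next
      case False
      hence "c0 \<in> L'" using c0 by blast
      hence "c0 \<in> \<sigma> ` L" using bij_betw_imp_surj_on[OF sig] by simp
      then obtain c where c: "c \<in> L" "c0 = \<sigma> c" by blast
      show ?thesis
      proof (rule ex1I[of _ "inv (w c)"])
        have "inv (w c) \<in> T" unfolding T_def using c(1) by blast
        thus "inv (w c) \<in> T \<and> inv (w c) \<in> c0" using w[OF c(1)] c(2) by simp
        fix t assume "t \<in> T \<and> t \<in> c0"
        thus "t = inv (w c)" using canon'[of t c] c(1) c(2) by simp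
      qed
    qed
  qed
qed

lemma good_exists:
  assumes fin: "finite (carrier G)" and cH: "card H = 2 ^ j"
    and star: "\<And>g. g \<in> carrier G \<Longrightarrow> g \<notin> H \<Longrightarrow> g \<otimes> g \<in> H \<Longrightarrow> (\<forall>h\<in>H. g \<otimes> h \<otimes> inv g \<in> H) \<Longrightarrow> \<exists>h\<in>H. (g \<otimes> h) \<otimes> (g \<otimes> h) = \<one>"
    and x: "x \<in> carrier G" "x \<notin> H"
  shows "\<exists>T. T \<subseteq> dcos G H x \<union> dcos G H (inv x) \<and> (\<forall>t\<in>T. inv t \<in> T) \<and>
            (\<forall>y \<in> dcos G H x \<union> dcos G H (inv x). \<exists>!t. t \<in> T \<and> t \<in> H #> y)"
proof -
  let ?D = "dcos G H x" and ?D' = "dcos G H (inv x)"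
  let ?R = "\<lambda>A. (\<lambda>y. H #> y) ` A"
  have ix: "inv x \<in> carrier G" using x by simp
  have HG: "H \<subseteq> carrier G" using subgroup.subset[OF H] .
  have U: "\<Union>(?R ?D \<union> ?R ?D') = ?D \<union> ?D'"
    by (simp only: Union_Un_distrib dc_Union[OF x(1)] dc_Union[OF ix])
  have suff: "\<exists>T. T \<subseteq> ?D \<union> ?D' \<and> (\<forall>t\<in>T. inv t \<in> T) \<and> (\<forall>y \<in> ?D \<union> ?D'. \<exists>!t. t \<in> T \<and> t \<in> H #> y)"
    if T: "T \<subseteq> \<Union>(?R ?D \<union> ?R ?D')" "\<forall>t\<in>T. inv t \<in> T" "\<forall>c\<in>?R ?D \<union> ?R ?D'. \<exists>!t. t \<in> T \<and> t \<in> c" for T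
  proof (rule exI[of _ T], intro conjI)
    show "T \<subseteq> ?D \<union> ?D'" using T(1) U by simp
    show "\<forall>t\<in>T. inv t \<in> T" by (rule T(2))
    show "\<forall>y \<in> ?D \<union> ?D'. \<exists>!t. t \<in> T \<and> t \<in> H #> y"
    proof
      fix y assume "y \<in> ?D \<union> ?D'"
      hence "H #> y \<in> ?R ?D \<union> ?R ?D'" by blast
      thus "\<exists>!t. t \<in> T \<and> t \<in> H #> y" by (rule bspec[OF T(3)])
    qed
  qed
  have RDsub: "?R ?D \<subseteq> (\<lambda>y. H #> y) ` carrier G" using dc_sub[OF x(1)] by blast
  have RD'sub: "?R ?D' \<subseteq> (\<lambda>y. H #> y) ` carrier G" using dc_sub[OF ix] by blast
  have fR: "finite (?R ?D)" "finite (?R ?D')"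
    using finite_subset[OF dc_sub[OF x(1)] fin] finite_subset[OF dc_sub[OF ix] fin] by auto
  show ?thesis
  proof (cases "?D = ?D'")
    case False
    have DD: "?D \<inter> ?D' = {}"
    proof (rule ccontr)
      assume "?D \<inter> ?D' \<noteq> {}"
      then obtain z where z: "z \<in> ?D" "z \<in> ?D'" by blast
      have "dcos G H z = ?D" by (rule dc_eq[OF x(1) z(1)])
      moreover have "dcos G H z = ?D'" by (rule dc_eq[OF ix z(2)])
      ultimately show False using False by simp
    qed
    have RR: "?R ?D \<inter> ?R ?D' = {}"
    proof (rule ccontr)
      assume "?R ?D \<inter> ?R ?D' \<noteq> {}"
      then obtain y z where y: "y \<in> ?D" and z: "z \<in> ?D'" and e: "H #> y = H #> z" by blast
      have "y \<in> H #> y" using rcos_self[OF _ H] dc_sub[OF x(1)] y by blast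
      hence "y \<in> ?D'" using e dc_rcos[OF ix z] by blast
      thus False using DD y by blast
    qed
    have cD: "card ?D' = card ?D"
    proof -
      have "?D' = (\<lambda>z. inv z) ` ?D"
      proof
        show "(\<lambda>z. inv z) ` ?D \<subseteq> ?D'" using dc_inv[OF x(1)] by blast
        show "?D' \<subseteq> (\<lambda>z. inv z) ` ?D"
        proof
          fix z assume z: "z \<in> ?D'"
          have "inv z \<in> dcos G H (inv (inv x))" by (rule dc_inv[OF ix z])
          hence "inv z \<in> ?D" using x(1) by simp
          moreover have "z = inv (inv z)" using dc_sub[OF ix] z by auto
          ultimately show "z \<in> (\<lambda>z. inv z) ` ?D" by blast
        qed
      qed
      moreover have "inj_on (\<lambda>z. inv z) ?D"
      proof (rule inj_onI)
        fix a b assume ab: "a \<in> ?D" "b \<in> ?D" "inv a = inv b"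
        hence "inv (inv a) = inv (inv b)" by simp
        thus "a = b" using ab dc_sub[OF x(1)] by auto
      qed
      ultimately show ?thesis by (simp add: card_image)
    qed
    have "card H * card (?R ?D) = card H * card (?R ?D')"
      using card_dc[OF fin x(1)] card_dc[OF fin ix] cD by simp
    moreover have "card H > 0" using finite_subset[OF HG fin] H1 by (auto simp: card_gt_0_iff)
    ultimately have "card (?R ?D) = card (?R ?D')" by simp
    then obtain \<sigma> where sig: "bij_betw \<sigma> (?R ?D) (?R ?D')" using finite_same_card_bij fR by blast
    have "\<exists>T. T \<subseteq> \<Union>(?R ?D \<union> ?R ?D') \<and> (\<forall>t\<in>T. inv t \<in> T) \<and> (\<forall>c\<in>?R ?D \<union> ?R ?D'. \<exists>!t. t \<in> T \<and> t \<in> c)"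
    proof (rule pair_transversal[OF RDsub RD'sub RR sig])
      fix c assume c: "c \<in> ?R ?D"
      then obtain y where y: "y \<in> ?D" "c = H #> y" by blast
      have "\<sigma> c \<in> ?R ?D'" using bij_betw_apply[OF sig c] .
      then obtain z where z: "z \<in> ?D'" "\<sigma> c = H #> z" by blast
      show "\<exists>w\<in>c. inv w \<in> \<sigma> c" using dc_match[OF x(1) y(1) z(1)] y(2) z(2) by simp
    qed
    then obtain T where "T \<subseteq> \<Union>(?R ?D \<union> ?R ?D')" "\<forall>t\<in>T. inv t \<in> T" "\<forall>c\<in>?R ?D \<union> ?R ?D'. \<exists>!t. t \<in> T \<and> t \<in> c"
      by (elim exE conjE) (rule that)
    thus ?thesis by (rule suff)
  next
    case True
    note DDeq = True
    have "card (?R ?D) dvd 2 ^ j" using dc_card_dvd[OF fin x(1)] cH by simp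
    then obtain e where e: "card (?R ?D) = 2 ^ e" by (auto simp: divides_primepow_nat)
    show ?thesis
    proof (cases "e = 0")
      case True
      hence c1: "card (?R ?D) = 1" using e by simp
      have xD: "x \<in> ?D" by (rule dc_self[OF x(1)])
      hence xR: "H #> x \<in> ?R ?D" by blast
      obtain z where z: "?R ?D = {z}" by (rule card_1_singletonE[OF c1])
      have RD: "?R ?D = {H #> x}" using z xR by simp
      have Dx: "?D = H #> x" using dc_Union[OF x(1)] RD by simp
      have norm: "\<forall>h\<in>H. x \<otimes> h \<otimes> inv x \<in> H"
      proof
        fix h assume h: "h \<in> H"
        have "x \<otimes> h \<in> ?D" using dc_mem[OF H1 h, of x] x(1) by simp
        hence "x \<otimes> h \<in> H #> x" using Dx by simp
        then obtain h' where h': "h' \<in> H" "x \<otimes> h = h' \<otimes> x" unfolding r_coset_def by blast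
        have "x \<otimes> h \<otimes> inv x = h' \<otimes> x \<otimes> inv x" using h'(2) by simp
        also have "\<dots> = h'" using x(1) Hc[OF h'(1)] by (simp add: m_assoc)
        finally show "x \<otimes> h \<otimes> inv x \<in> H" using h'(1) by simp
      qed
      have xx: "x \<otimes> x \<in> H"
      proof -
        have "inv x \<in> ?D'" by (rule dc_self[OF ix])
        hence "inv x \<in> H #> x" using DDeq Dx by simp
        then obtain h' where h': "h' \<in> H" "inv x = h' \<otimes> x" unfolding r_coset_def by blast
        have h'c: "h' \<in> carrier G" using Hc[OF h'(1)] .
        have "h' = h' \<otimes> x \<otimes> inv x" using h'c x(1) by (simp add: m_assoc)
        also have "\<dots> = inv x \<otimes> inv x" using h'(2) by simp
        finally have "inv h' = inv (inv x \<otimes> inv x)" by simp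
        also have "\<dots> = x \<otimes> x" using x(1) by (simp add: inv_mult_group)
        finally show ?thesis using Hi[OF h'(1)] by simp
      qed
      obtain h0 where h0: "h0 \<in> H" "(x \<otimes> h0) \<otimes> (x \<otimes> h0) = \<one>" using star[OF x xx norm] by blast
      have tc: "x \<otimes> h0 \<in> carrier G" using x(1) Hc[OF h0(1)] by simp
      have ti: "inv (x \<otimes> h0) = x \<otimes> h0" by (rule inv_equality[OF h0(2) tc tc])
      have tD: "x \<otimes> h0 \<in> ?D" using dc_mem[OF H1 h0(1), of x] x(1) by simp
      show ?thesis
      proof (rule exI[of _ "{x \<otimes> h0}"], intro conjI ballI)
        show "{x \<otimes> h0} \<subseteq> ?D \<union> ?D'" using tD by simp
      next
        fix t assume "t \<in> {x \<otimes> h0}" thus "inv t \<in> {x \<otimes> h0}" using ti by simp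
      next
        fix y assume y: "y \<in> ?D \<union> ?D'"
        hence "y \<in> ?D" using DDeq by simp
        hence "H #> y \<in> ?R ?D" by blast
        hence "H #> y = ?D" using RD Dx by simp
        thus "\<exists>!t. t \<in> {x \<otimes> h0} \<and> t \<in> H #> y" using tD by auto
      qed
    next
      case False
      let ?L = "?R ?D"
      have ev: "even (card ?L)" using e False by simp
      obtain A where A: "A \<subseteq> ?L" "card A = card ?L div 2" "finite A"
        using obtain_subset_with_card_n[of "card ?L div 2" ?L] by auto
      have cA': "card (?L - A) = card A" using card_Diff_subset[OF A(3) A(1)] A(2) ev by auto
      obtain \<sigma> where sig: "bij_betw \<sigma> A (?L - A)"
        using finite_same_card_bij[OF A(3) _ cA'[symmetric]] fR(1) by auto
      have eqA: "A \<union> (?L - A) = ?R ?D \<union> ?R ?D'" using A(1) DDeq by auto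
      have "\<exists>T. T \<subseteq> \<Union>(A \<union> (?L - A)) \<and> (\<forall>t\<in>T. inv t \<in> T) \<and> (\<forall>c\<in>A \<union> (?L - A). \<exists>!t. t \<in> T \<and> t \<in> c)"
      proof (rule pair_transversal)
        show "A \<subseteq> (\<lambda>y. H #> y) ` carrier G" using A(1) RDsub by blast
        show "?L - A \<subseteq> (\<lambda>y. H #> y) ` carrier G" using RDsub by blast
        show "A \<inter> (?L - A) = {}" by blast
        show "bij_betw \<sigma> A (?L - A)" by (rule sig)
      next
        fix c assume c: "c \<in> A"
        then obtain y where y: "y \<in> ?D" "c = H #> y" using A(1) by blast
        have "\<sigma> c \<in> ?L - A" using bij_betw_apply[OF sig c] .
        then obtain z where z: "z \<in> ?D" "\<sigma> c = H #> z" by blast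
        have z': "z \<in> ?D'" using z(1) DDeq by simp
        show "\<exists>w\<in>c. inv w \<in> \<sigma> c" using dc_match[OF x(1) y(1) z'] y(2) z(2) by simp
      qed
      hence "\<exists>T. T \<subseteq> \<Union>(?R ?D \<union> ?R ?D') \<and> (\<forall>t\<in>T. inv t \<in> T) \<and> (\<forall>c\<in>?R ?D \<union> ?R ?D'. \<exists>!t. t \<in> T \<and> t \<in> c)"
        unfolding eqA .
      then obtain T where "T \<subseteq> \<Union>(?R ?D \<union> ?R ?D')" "\<forall>t\<in>T. inv t \<in> T" "\<forall>c\<in>?R ?D \<union> ?R ?D'. \<exists>!t. t \<in> T \<and> t \<in> c"
        by (elim exE conjE) (rule that)
      thus ?thesis by (rule suff)
    qed
  qed
qed

lemma perfect_code_crit: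
  assumes fin: "finite (carrier G)" and cH: "card H = 2 ^ j"
    and star: "\<And>g. g \<in> carrier G \<Longrightarrow> g \<notin> H \<Longrightarrow> g \<otimes> g \<in> H \<Longrightarrow> (\<forall>h\<in>H. g \<otimes> h \<otimes> inv g \<in> H) \<Longrightarrow> \<exists>h\<in>H. (g \<otimes> h) \<otimes> (g \<otimes> h) = \<one>"
  shows "subgroup_perfect_code G H"
proof -
  define E where "E x = dcos G H x \<union> dcos G H (inv x)" for x
  define P where "P A T \<longleftrightarrow> T \<subseteq> A \<and> (\<forall>t\<in>T. inv t \<in> T) \<and> (\<forall>y\<in>A. \<exists>!t. t \<in> T \<and> t \<in> H #> y)" for A T
  define f where "f A = (SOME T. P A T)" for A
  have fP: "P (E x) (f (E x))" if x: "x \<in> carrier G" "x \<notin> H" for x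
  proof -
    have "\<exists>T. P (E x) T" unfolding P_def E_def using good_exists[OF fin cH star x] .
    thus ?thesis unfolding f_def by (rule someI_ex)
  qed
  have E_eq: "E y = E x" if x: "x \<in> carrier G" and y: "y \<in> E x" for x y
  proof -
    have ix: "inv x \<in> carrier G" using x by simp
    show ?thesis
    proof (cases "y \<in> dcos G H x")
      case True
      have "dcos G H y = dcos G H x" by (rule dc_eq[OF x True])
      moreover have "dcos G H (inv y) = dcos G H (inv x)" by (rule dc_eq[OF ix dc_inv[OF x True]])
      ultimately show ?thesis unfolding E_def by simp
    next
      case False
      hence y': "y \<in> dcos G H (inv x)" using y unfolding E_def by blast
      have "dcos G H y = dcos G H (inv x)" by (rule dc_eq[OF ix y'])
      moreover have "inv y \<in> dcos G H x" using dc_inv[OF ix y'] x by simp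
      hence "dcos G H (inv y) = dcos G H x" by (rule dc_eq[OF x])
      ultimately show ?thesis unfolding E_def by blast
    qed
  qed
  have E_sub: "E x \<subseteq> carrier G" if x: "x \<in> carrier G" for x
    unfolding E_def using dc_sub[OF x] dc_sub[of "inv x"] x by simp
  have E_notH: "E x \<inter> H = {}" if x: "x \<in> carrier G" "x \<notin> H" for x
  proof -
    have "inv x \<notin> H"
    proof
      assume "inv x \<in> H"
      hence "inv (inv x) \<in> H" by (rule Hi)
      thus False using x by simp
    qed
    thus ?thesis unfolding E_def using dc_notH[OF x] dc_notH[of "inv x"] x by auto
  qed
  have xE: "x \<in> E x" if x: "x \<in> carrier G" for x unfolding E_def using dc_self[OF x] by simp
  define S where "S = (\<Union>x\<in>carrier G - H. f (E x))"
  have S_prop: "s \<in> carrier G \<and> s \<notin> H \<and> E s = E x \<and> s \<in> f (E x)" if s: "s \<in> f (E x)" and x: "x \<in> carrier G" "x \<notin> H" for s x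
  proof -
    have "s \<in> E x" using fP[OF x] s unfolding P_def by blast
    thus ?thesis using E_sub[OF x(1)] E_notH[OF x] E_eq[OF x(1)] s by blast
  qed
  have Sc: "s \<in> carrier G" "s \<notin> H" if "s \<in> S" for s
    using that S_prop unfolding S_def by blast+
  show ?thesis
    unfolding subgroup_perfect_code_def
  proof (rule exI[of _ S], intro conjI)
    show "S \<subseteq> carrier G - {\<one>}" using Sc H1 by blast
    show "\<forall>s\<in>S. inv s \<in> S"
    proof
      fix s assume "s \<in> S"
      then obtain x where x: "x \<in> carrier G" "x \<notin> H" "s \<in> f (E x)" unfolding S_def by blast
      have "inv s \<in> f (E x)" using fP[OF x(1,2)] x(3) unfolding P_def by blast
      thus "inv s \<in> S" unfolding S_def using x by blast
    qed
    show "perfect_code_in_cayley G S H"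
      unfolding perfect_code_in_cayley_def
    proof (intro conjI ballI)
      show "H \<subseteq> carrier G" using subgroup.subset[OF H] .
    next
      fix a b assume a: "a \<in> H" and b: "b \<in> H"
      show "\<not> cayley_adj G S a b"
      proof
        assume "cayley_adj G S a b"
        then obtain s where s: "s \<in> S" "b = s \<otimes> a" unfolding cayley_adj_def by blast
        have sc: "s \<in> carrier G" using Sc[OF s(1)] by simp
        have "s = b \<otimes> inv a" using s(2) sc Hc[OF a] by (simp add: m_assoc)
        hence "s \<in> H" using Hm[OF b Hi[OF a]] by simp
        thus False using Sc[OF s(1)] by simp
      qed
    next
      fix v assume v: "v \<in> carrier G - H"
      define y where "y = inv v"
      have yc: "y \<in> carrier G" using v y_def by simp
      have yH: "y \<notin> H"
      proof
        assume "y \<in> H"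
        hence "inv y \<in> H" by (rule Hi)
        thus False using v y_def by simp
      qed
      have Py: "P (E y) (f (E y))" by (rule fP[OF yc yH])
      have "\<exists>!t. t \<in> f (E y) \<and> t \<in> H #> y" using Py xE[OF yc] unfolding P_def by blast
      then obtain t where t: "t \<in> f (E y)" "t \<in> H #> y" and tu: "\<And>t'. t' \<in> f (E y) \<and> t' \<in> H #> y \<Longrightarrow> t' = t"
        by (elim ex1E) blast
      have tS: "t \<in> S" unfolding S_def using t(1) yc yH by blast
      have tc: "t \<in> carrier G" using Sc[OF tS] by simp
      obtain h where h: "h \<in> H" "t = h \<otimes> y" using t(2) unfolding r_coset_def by blast
      have tv: "t \<otimes> v = h" using h v Hc[OF h(1)] y_def by (simp add: m_assoc)
      show "\<exists>!c. c \<in> H \<and> cayley_adj G S v c"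
      proof (rule ex1I[of _ "t \<otimes> v"])
        show "t \<otimes> v \<in> H \<and> cayley_adj G S v (t \<otimes> v)"
          unfolding cayley_adj_def using tv h(1) v tS tc by auto
      next
        fix c assume c: "c \<in> H \<and> cayley_adj G S v c"
        then obtain s where s: "s \<in> S" "c = s \<otimes> v" unfolding cayley_adj_def by blast
        have sc: "s \<in> carrier G" using Sc[OF s(1)] by simp
        have "s = c \<otimes> y" using s(2) sc v y_def by (simp add: m_assoc)
        hence sy: "s \<in> H #> y" using rcosI[OF _ subgroup.subset[OF H] yc] c by simp
        have "s \<in> dcos G H y" using dc_rcos[OF yc dc_self[OF yc]] sy by blast
        hence "s \<in> E y" unfolding E_def by blast
        hence Es: "E s = E y" by (rule E_eq[OF yc])
        obtain x where x: "x \<in> carrier G" "x \<notin> H" "s \<in> f (E x)" using s(1) unfolding S_def by blast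
        have "E s = E x" using S_prop[OF x(3) x(1,2)] by simp
        hence "s \<in> f (E y)" using x(3) Es by simp
        hence "s = t" using tu sy by blast
        thus "c = t \<otimes> v" using s(2) by simp
      qed
    qed
  qed
qed

end
end
lemma (in group) cyclic_not_pc:
  assumes fin: "finite (carrier G)" and H: "subgroup H G" and C: "subgroup C G" "card C = 2 ^ m"
    and cyc: "cyclic_group (subgroup_generated G C)" and Hne: "H \<noteq> {\<one>}" and HC: "H \<subset> C"
  shows "\<not> subgroup_perfect_code G H"
proof -
  have Hc: "\<And>h. h \<in> H \<Longrightarrow> h \<in> carrier G" using subgroup.subset[OF H] by blast
  have Hm: "\<And>a b. a \<in> H \<Longrightarrow> b \<in> H \<Longrightarrow> a \<otimes> b \<in> H" by (rule subgroup.m_closed[OF H])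
  have Hi: "\<And>a. a \<in> H \<Longrightarrow> inv a \<in> H" by (rule subgroup.m_inv_closed[OF H])
  have H1: "\<one> \<in> H" by (rule subgroup.one_closed[OF H])
  have Hp: "\<And>a n. a \<in> H \<Longrightarrow> a [^] (n::nat) \<in> H"
  proof -
    fix a and n :: nat assume a: "a \<in> H"
    show "a [^] n \<in> H" by (induction n) (use H1 Hm a in auto)
  qed
  have CG: "C \<subseteq> carrier G" using subgroup.subset[OF C(1)] .
  have gr: "group (subgroup_generated G C)" by (rule group_subgroup_generated)
  have carr: "carrier (subgroup_generated G C) = C"
    by (rule subgroup.carrier_subgroup_generated_subgroup[OF C(1)])
  obtain c where c: "c \<in> C" "C = range (\<lambda>i::int. c [^]\<^bsub>subgroup_generated G C\<^esub> i)"
    using cyc unfolding group.cyclic_group[OF gr] carr by blast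
  have cG: "c \<in> carrier G" using c(1) CG by blast
  have "C = range (\<lambda>i::int. c [^] i)"
    using c int_pow_subgroup_generated[of c C] carr by simp
  hence Cgen: "C = generate G {c}" using generate_pow[OF cG] by auto
  hence Cnat: "C = {c [^] k | k. k \<in> (UNIV :: nat set)}" using generate_pow_on_finite_carrier[OF fin cG] by simp
  define N where "N = ord c"
  have N: "N = 2 ^ m"
  proof -
    have "N = order (subgroup_generated G {c})" unfolding N_def by (rule cyclic_order_is_ord[OF cG])
    also have "\<dots> = card C" unfolding order_def carrier_subgroup_generated using Cgen cG by simp
    finally show ?thesis using C(2) by simp
  qed
  have cN: "c [^] N = \<one>" unfolding N_def using cG by simp
  have Npos: "N > 0" using N by simp
  have Cpow: "\<exists>t::nat. z = c [^] t" if "z \<in> C" for z using that Cnat by blast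
  have Cc: "\<And>z. z \<in> C \<Longrightarrow> z \<in> carrier G" using CG by blast
  have comm: "z1 \<otimes> z2 = z2 \<otimes> z1" if zz: "z1 \<in> C" "z2 \<in> C" for z1 z2
  proof -
    obtain a :: nat where a: "z1 = c [^] a" using Cpow zz(1) by blast
    obtain b :: nat where b: "z2 = c [^] b" using Cpow zz(2) by blast

    show ?thesis using a b cG by (simp add: nat_pow_mult add.commute)
  qed
  define k where "k = (LEAST t::nat. 0 < t \<and> c [^] t \<in> H)"
  have kex: "0 < N \<and> c [^] N \<in> H" using Npos cN H1 by simp
  have k: "0 < k \<and> c [^] k \<in> H" unfolding k_def by (rule LeastI[of _ N], rule kex)
  have kmin: "\<And>t. 0 < t \<Longrightarrow> c [^] t \<in> H \<Longrightarrow> k \<le> t" unfolding k_def by (rule Least_le) simp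
  have kdvd: "k dvd t" if t: "c [^] t \<in> H" for t
  proof -
    have e: "c [^] t = (c [^] k) [^] (t div k) \<otimes> c [^] (t mod k)"
    proof -
      have "c [^] t = c [^] (k * (t div k) + t mod k)" by simp
      also have "\<dots> = (c [^] k) [^] (t div k) \<otimes> c [^] (t mod k)" using cG by (simp add: nat_pow_mult nat_pow_pow)
      finally show ?thesis .
    qed
    have q: "(c [^] k) [^] (t div k) \<in> H" using Hp k by blast
    have qc: "(c [^] k) [^] (t div k) \<in> carrier G" using cG by simp
    have "c [^] (t mod k) = inv ((c [^] k) [^] (t div k)) \<otimes> c [^] t" using e qc cG by simp
    hence "c [^] (t mod k) \<in> H" using Hm[OF Hi[OF q] t] by simp
    moreover have "t mod k < k" using k by simp
    ultimately have "t mod k = 0" using kmin by (meson not_less neq0_conv)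
    thus ?thesis by auto
  qed
  have powH: "c [^] t \<in> H" if kt: "k dvd t" for t
  proof -
    obtain q where "t = k * q" using kt by blast
    thus ?thesis using Hp[of "c [^] k" q] k cG by (simp add: nat_pow_pow)
  qed
  have "k dvd 2 ^ m" using kdvd kex N by simp
  then obtain e where e: "e \<le> m" "k = 2 ^ e" by (auto simp: divides_primepow_nat)
  have cH: "c \<notin> H"
  proof
    assume "c \<in> H"
    hence "C \<subseteq> H" using Cnat Hp by blast
    thus False using HC by blast
  qed
  have e1: "e \<noteq> 0"
  proof
    assume "e = 0"
    hence "c [^] (1::nat) \<in> H" using k e by simp
    thus False using cH cG by simp
  qed
  have em: "e \<noteq> m"
  proof
    assume em: "e = m"
    obtain h where h: "h \<in> H" "h \<noteq> \<one>" using Hne H1 by blast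
    obtain t :: nat where t: "h = c [^] t" using Cpow h HC by blast
    have "N dvd t" using kdvd h t e em N by simp
    hence "h = \<one>" using t cG N_def by (simp add: pow_eq_id)
    thus False using h by simp
  qed
  define g where "g = c [^] (2 ^ (e - 1) :: nat)"
  have gC: "g \<in> C" using Cnat g_def by blast
  have gc: "g \<in> carrier G" using gC Cc by blast
  have gH: "g \<notin> H"
  proof
    assume "g \<in> H"
    hence "k dvd 2 ^ (e - 1)" using kdvd g_def by simp
    hence "2 ^ e dvd (2::nat) ^ (e - 1)" using e by simp
    thus False using e1 dvd_power_iff_le[of 2 e "e - 1"] by simp
  qed
  have gg: "g \<otimes> g \<in> H"
  proof -
    have "g \<otimes> g = c [^] ((2::nat) ^ (e - 1) + 2 ^ (e - 1))" using cG by (simp add: g_def nat_pow_mult)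
    also have "(2::nat) ^ (e - 1) + 2 ^ (e - 1) = k" using e e1 by (cases e) auto
    finally show ?thesis using k by simp
  qed
  have nosq: "(h \<otimes> g) \<otimes> (h \<otimes> g) \<noteq> \<one>" if h: "h \<in> H" for h
  proof
    assume sq: "(h \<otimes> g) \<otimes> (h \<otimes> g) = \<one>"
    have hC: "h \<in> C" using h HC by blast
    have "h \<otimes> g \<in> C" by (rule subgroup.m_closed[OF C(1) hC gC])
    then obtain a :: nat where a: "h \<otimes> g = c [^] a" using Cpow by blast
    have "c [^] (a + a) = \<one>" using sq a cG by (simp add: nat_pow_mult)
    hence Na: "N dvd a + a" unfolding N_def using cG by (simp add: pow_eq_id)
    have "2 ^ (m - 1) dvd a"
    proof (cases m)
      case 0 thus ?thesis using e em by simp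
    next
      case (Suc n)
      have "2 * 2 ^ n dvd 2 * a" using Na N Suc by (simp add: mult_2)
      thus ?thesis using Suc by simp
    qed
    moreover have "(2::nat) ^ e dvd 2 ^ (m - 1)" using e em by (simp add: le_imp_power_dvd)
    ultimately have "k dvd a" using e dvd_trans by blast
    hence "c [^] a \<in> H" by (rule powH)
    hence "inv h \<otimes> (h \<otimes> g) \<in> H" using Hm[OF Hi[OF h]] a by simp
    hence "g \<in> H" using Hc[OF h] gc by simp
    thus False using gH by simp
  qed
  show ?thesis
  proof
    assume "subgroup_perfect_code G H"
    then obtain S where S: "S \<subseteq> carrier G - {\<one>}" "\<forall>s\<in>S. inv s \<in> S" "perfect_code_in_cayley G S H"
      unfolding subgroup_perfect_code_def by blast
    have uq: "\<And>v. v \<in> carrier G - H \<Longrightarrow> \<exists>!c. c \<in> H \<and> cayley_adj G S v c"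
      using S(3) unfolding perfect_code_in_cayley_def by blast
    have igH: "inv g \<notin> H"
    proof
      assume "inv g \<in> H"
      hence "inv (inv g) \<in> H" by (rule Hi)
      thus False using gH gc by simp
    qed
    have "\<exists>!c. c \<in> H \<and> cayley_adj G S (inv g) c" using uq igH gc by simp
    then obtain c0 where c0: "c0 \<in> H" "cayley_adj G S (inv g) c0" by (elim ex1E) blast
    then obtain s0 where s0: "s0 \<in> S" "c0 = s0 \<otimes> inv g" unfolding cayley_adj_def by blast
    have s0c: "s0 \<in> carrier G" using s0(1) S(1) by blast
    have c0c: "c0 \<in> carrier G" using Hc[OF c0(1)] .
    have s0e: "s0 = c0 \<otimes> g" using s0(2) s0c gc by (simp add: m_assoc)
    have is0: "inv s0 \<in> S" using S(2) s0(1) by blast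
    have a1: "s0 \<otimes> g \<in> H" using Hm[OF c0(1) gg] s0e c0c gc by (simp add: m_assoc)
    have "inv c0 \<otimes> g = g \<otimes> inv c0" by (rule comm) (use Hi[OF c0(1)] HC gC in blast)+
    hence a2e: "inv s0 \<otimes> g = inv c0" using s0e c0c gc by (simp add: inv_mult_group m_assoc)
    have a2: "inv s0 \<otimes> g \<in> H" using a2e Hi[OF c0(1)] by simp
    have adj1: "cayley_adj G S g (s0 \<otimes> g)" unfolding cayley_adj_def using gc s0c s0(1) by auto
    have adj2: "cayley_adj G S g (inv s0 \<otimes> g)" unfolding cayley_adj_def using gc s0c is0 by auto
    have "\<exists>!c. c \<in> H \<and> cayley_adj G S g c" using uq gH gc by simp
    hence "s0 \<otimes> g = inv s0 \<otimes> g" using a1 a2 adj1 adj2 by blast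
    hence "s0 = inv s0" using s0c gc by simp
    hence "s0 \<otimes> s0 = \<one>" using s0c by (metis r_inv)
    thus False using nosq[OF c0(1)] s0e by simp
  qed
qed
lemma (in group) sylow_exists:
  assumes fin: "finite (carrier G)"
  shows "\<exists>P k. subgroup P G \<and> card P = 2 ^ k \<and> \<not> 2 ^ Suc k dvd order G"
proof -
  define a where "a = multiplicity (2::nat) (order G)"
  have d: "2 ^ a dvd order G" unfolding a_def by (rule multiplicity_dvd)
  define m where "m = order G div 2 ^ a"
  have om: "order G = 2 ^ a * m" using d unfolding m_def by simp
  obtain P where P: "subgroup P G" "card P = 2 ^ a"
    using sylow_thm[of 2 G a m] om fin is_group by auto
  have "\<not> 2 ^ Suc a dvd order G"
    using power_dvd_iff_le_multiplicity[where p=2 and n="Suc a" and x="order G"] unfolding a_def using order_gt_0_iff_finite fin by simp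
  thus ?thesis using P by blast
qed

lemma dmult: "monoid.mult (dihedral_group n) (i, e) (j, f) = ((if e then i + n - j else i + j) mod n, e \<noteq> f)"
  by (simp add: dihedral_group_def)

lemma dcarrier: "carrier (dihedral_group n) = {0..<n} \<times> UNIV"
  by (simp add: dihedral_group_def)

lemma (in group) dihedral_case:
  assumes P: "subgroup P G" "card P = 2 ^ a"
    and phi: "\<phi> \<in> iso (G\<lparr>carrier := P\<rparr>) (dihedral_group n)" and n2: "n \<ge> 2"
    and H: "subgroup H G" "H \<subseteq> P" and g: "g \<in> P" "g \<notin> H"
    and noC: "\<not> (\<exists>C. is_p_subgroup 2 G C \<and> cyclic_group (subgroup_generated G C) \<and> H \<noteq> {\<one>} \<and> H \<subset> C)"
    and Hne: "H \<noteq> {\<one>}"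
  shows "\<exists>h\<in>H. (g \<otimes> h) \<otimes> (g \<otimes> h) = \<one>"
proof -
  have PG: "P \<subseteq> carrier G" using subgroup.subset[OF P(1)] .
  have Pm: "\<And>a b. a \<in> P \<Longrightarrow> b \<in> P \<Longrightarrow> a \<otimes> b \<in> P" by (rule subgroup.m_closed[OF P(1)])
  have Pi: "\<And>a. a \<in> P \<Longrightarrow> inv a \<in> P" by (rule subgroup.m_inv_closed[OF P(1)])
  have P1: "\<one> \<in> P" by (rule subgroup.one_closed[OF P(1)])
  have H1: "\<one> \<in> H" by (rule subgroup.one_closed[OF H(1)])
  have hom: "\<And>x y. x \<in> P \<Longrightarrow> y \<in> P \<Longrightarrow> \<phi> (x \<otimes> y) = \<phi> x \<otimes>\<^bsub>dihedral_group n\<^esub> \<phi> y"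
    using phi unfolding iso_def hom_def by auto
  have bij: "bij_betw \<phi> P ({0..<n} \<times> UNIV)" using phi unfolding iso_def by (simp add: dcarrier)
  have inj: "inj_on \<phi> P" using bij by (rule bij_betw_imp_inj_on)
  have surj: "\<phi> ` P = {0..<n} \<times> UNIV" using bij by (rule bij_betw_imp_surj_on)
  have maps: "\<And>x. x \<in> P \<Longrightarrow> fst (\<phi> x) < n"
  proof -
    fix x assume "x \<in> P"
    hence "\<phi> x \<in> {0..<n} \<times> UNIV" using surj by blast
    thus "fst (\<phi> x) < n" by (cases "\<phi> x") auto
  qed
  have snd_mult: "snd (\<phi> (x \<otimes> y)) = (snd (\<phi> x) \<noteq> snd (\<phi> y))" if xy: "x \<in> P" "y \<in> P" for x y
    using hom[OF xy] by (cases "\<phi> x", cases "\<phi> y") (simp add: dmult)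
  have phi1: "\<phi> \<one> = (0, False)"
  proof -
    obtain a0 b0 where ab: "\<phi> \<one> = (a0, b0)" by (cases "\<phi> \<one>")
    have a0n: "a0 < n" using maps[OF P1] ab by simp
    have "\<phi> \<one> = \<phi> (\<one> \<otimes> \<one>)" by simp
    also have "\<dots> = (a0, b0) \<otimes>\<^bsub>dihedral_group n\<^esub> (a0, b0)" using hom[OF P1 P1] ab by simp
    finally have e: "\<phi> \<one> = ((if b0 then a0 + n - a0 else a0 + a0) mod n, False)" by (simp add: dmult)
    hence bF: "\<not> b0" using ab by simp
    have am: "a0 = (a0 + a0) mod n" using e ab bF by simp
    have "a0 = 0"
    proof (cases "a0 + a0 < n")
      case True thus ?thesis using am by simp
    next
      case False
      hence "(a0 + a0) mod n = (a0 + a0 - n) mod n" by (simp add: le_mod_geq)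
      also have "\<dots> = a0 + a0 - n" using a0n by simp
      finally show ?thesis using am a0n by simp
    qed
    thus ?thesis using ab bF by simp
  qed
  have sq: "t \<otimes> t = \<one>" if t: "t \<in> P" "snd (\<phi> t)" for t
  proof -
    obtain i where i: "\<phi> t = (i, True)" using t(2) by (cases "\<phi> t") auto
    have "i < n" using maps[OF t(1)] i by simp
    hence "\<phi> (t \<otimes> t) = (0, False)" using hom[OF t(1) t(1)] i by (simp add: dmult)
    hence "\<phi> (t \<otimes> t) = \<phi> \<one>" using phi1 by simp
    thus ?thesis using inj_onD[OF inj _ Pm[OF t(1) t(1)] P1] by simp
  qed
  show ?thesis
  proof (cases "\<exists>h\<in>H. snd (\<phi> (g \<otimes> h))")
    case True
    then obtain h where h: "h \<in> H" "snd (\<phi> (g \<otimes> h))" by blast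
    have "g \<otimes> h \<in> P" using Pm g(1) h(1) H(2) by blast
    thus ?thesis using sq h by blast
  next
    case False
    define C where "C = {y \<in> P. \<not> snd (\<phi> y)}"
    have gP: "g \<in> carrier G" using g(1) PG by blast
    have gC: "g \<in> C"
    proof -
      have "\<not> snd (\<phi> (g \<otimes> \<one>))" using False H1 by blast
      thus ?thesis unfolding C_def using g(1) gP by simp
    qed
    have HCs: "H \<subseteq> C"
    proof
      fix h assume h: "h \<in> H"
      have hP: "h \<in> P" using h H(2) by blast
      have "\<not> snd (\<phi> (g \<otimes> h))" using False h by blast
      hence "\<not> snd (\<phi> h)" using snd_mult[OF g(1) hP] gC unfolding C_def by simp
      thus "h \<in> C" unfolding C_def using hP by simp
    qed
    have HC: "H \<subset> C" using HCs gC g(2) by blast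
    have Csub: "subgroup C G"
    proof (rule subgroupI)
      show "C \<subseteq> carrier G" unfolding C_def using PG by blast
      show "C \<noteq> {}" using gC by blast
    next
      fix x assume x: "x \<in> C"
      hence xP: "x \<in> P" and xs: "\<not> snd (\<phi> x)" unfolding C_def by auto
      have ixP: "inv x \<in> P" by (rule Pi[OF xP])
      have "x \<otimes> inv x = \<one>" using xP PG by auto
      hence "snd (\<phi> (x \<otimes> inv x)) = False" using phi1 by simp
      hence "\<not> snd (\<phi> (inv x))" using snd_mult[OF xP ixP] xs by simp
      thus "inv x \<in> C" unfolding C_def using ixP by simp
    next
      fix x y assume "x \<in> C" "y \<in> C"
      hence xy: "x \<in> P" "y \<in> P" "\<not> snd (\<phi> x)" "\<not> snd (\<phi> y)" unfolding C_def by auto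
      thus "x \<otimes> y \<in> C" unfolding C_def using Pm[OF xy(1,2)] snd_mult[OF xy(1,2)] by simp
    qed
    have cP: "card P = 2 * n"
    proof -
      have "card P = card ({0..<n} \<times> (UNIV :: bool set))" using bij by (rule bij_betw_same_card)
      thus ?thesis by (simp add: card_cartesian_product)
    qed
    have bijC: "bij_betw \<phi> C ({0..<n} \<times> {False})"
    proof (rule bij_betw_imageI)
      show "inj_on \<phi> C" using inj unfolding C_def by (rule inj_on_subset) blast
      show "\<phi> ` C = {0..<n} \<times> {False}"
      proof
        show "\<phi> ` C \<subseteq> {0..<n} \<times> {False}"
        proof
          fix z assume "z \<in> \<phi> ` C"
          then obtain y where y: "y \<in> C" "z = \<phi> y" by blast
          have "fst z < n" using maps y unfolding C_def by blast
          moreover have "snd z = False" using y unfolding C_def by simp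
          ultimately show "z \<in> {0..<n} \<times> {False}" by (cases z) auto
        qed
        show "{0..<n} \<times> {False} \<subseteq> \<phi> ` C"
        proof
          fix z assume z: "z \<in> {0..<n} \<times> {False}"
          hence "z \<in> \<phi> ` P" using surj by blast
          then obtain y where y: "y \<in> P" "z = \<phi> y" by blast
          have "y \<in> C" unfolding C_def using y z by auto
          thus "z \<in> \<phi> ` C" using y by blast
        qed
      qed
    qed
    have cC: "card C = n" using bij_betw_same_card[OF bijC] by simp
    have "2 * n = 2 ^ a" using cP P(2) by simp
    hence n2a: "n = 2 ^ (a - 1)" by (cases a) auto
    have pC: "is_p_subgroup 2 G C" unfolding is_p_subgroup_def using Csub cC n2a by blast
    have "(1, False) \<in> \<phi> ` P" using surj n2 by auto
    then obtain r where r0: "(1, False) = \<phi> r" "r \<in> P" by (rule imageE)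
    hence r: "r \<in> P" "\<phi> r = (1, False)" by simp_all
    have rC: "r \<in> C" unfolding C_def using r by simp
    have rpow: "r [^] t \<in> P \<and> \<phi> (r [^] t) = (t mod n, False)" for t :: nat
    proof (induction t)
      case 0 thus ?case using P1 phi1 by simp
    next
      case (Suc t)
      have "r [^] Suc t = r [^] t \<otimes> r" by simp
      moreover have "r [^] t \<otimes> r \<in> P" using Pm Suc r(1) by blast
      moreover have "\<phi> (r [^] t \<otimes> r) = (Suc t mod n, False)"
        using hom[of "r [^] t" r] Suc r by (simp add: dmult mod_Suc_eq)
      ultimately show ?case by simp
    qed
    have gr: "group (subgroup_generated G C)" by (rule group_subgroup_generated)
    have carr: "carrier (subgroup_generated G C) = C"
      by (rule subgroup.carrier_subgroup_generated_subgroup[OF Csub])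
    have rng: "C = range (\<lambda>i::int. r [^]\<^bsub>subgroup_generated G C\<^esub> i)"
    proof
      show "C \<subseteq> range (\<lambda>i::int. r [^]\<^bsub>subgroup_generated G C\<^esub> i)"
      proof
        fix y assume y: "y \<in> C"
        hence yP: "y \<in> P" and ys: "\<not> snd (\<phi> y)" unfolding C_def by auto
        obtain i where i: "\<phi> y = (i, False)" using ys by (cases "\<phi> y") auto
        have "i < n" using maps[OF yP] i by simp
        hence "\<phi> (r [^] i) = \<phi> y" using rpow[of i] i by simp
        hence "y = r [^] i" using inj_onD[OF inj _ yP] rpow[of i] by simp
        also have "\<dots> = r [^] (int i)" by (simp add: int_pow_int)
        also have "\<dots> = r [^]\<^bsub>subgroup_generated G C\<^esub> (int i)"
          using int_pow_subgroup_generated[of r C] rC carr by simp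
        finally show "y \<in> range (\<lambda>i::int. r [^]\<^bsub>subgroup_generated G C\<^esub> i)" by blast
      qed
      show "range (\<lambda>i::int. r [^]\<^bsub>subgroup_generated G C\<^esub> i) \<subseteq> C"
        using group.int_pow_closed[OF gr] rC carr by auto
    qed
    have "cyclic_group (subgroup_generated G C)"
      unfolding group.cyclic_group[OF gr] carr using rC rng by blast
    thus ?thesis using noC pC Hne HC by blast
  qed
qed

lemma (in group) ext_subgroup:
  assumes H: "subgroup H G" and fH: "finite H"
    and g: "g \<in> carrier G" "g \<notin> H" "g \<otimes> g \<in> H" "\<forall>h\<in>H. g \<otimes> h \<otimes> inv g \<in> H"
  shows "subgroup (H \<union> (\<lambda>h. g \<otimes> h) ` H) G \<and> card (H \<union> (\<lambda>h. g \<otimes> h) ` H) = 2 * card H"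
proof -
  have Hc: "\<And>h. h \<in> H \<Longrightarrow> h \<in> carrier G" using subgroup.subset[OF H] by blast
  have Hm: "\<And>a b. a \<in> H \<Longrightarrow> b \<in> H \<Longrightarrow> a \<otimes> b \<in> H" by (rule subgroup.m_closed[OF H])
  have Hi: "\<And>a. a \<in> H \<Longrightarrow> inv a \<in> H" by (rule subgroup.m_inv_closed[OF H])
  have H1: "\<one> \<in> H" by (rule subgroup.one_closed[OF H])
  let ?u = "g \<otimes> g"
  have uc: "?u \<in> carrier G" using g by simp
  have nl: "\<And>h. h \<in> H \<Longrightarrow> g \<otimes> h \<otimes> inv g \<in> H" using g(4) by blast
  have nr: "inv g \<otimes> h \<otimes> g \<in> H" if h: "h \<in> H" for h
  proof -
    have hc: "h \<in> carrier G" using Hc[OF h] .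
    have "inv g \<otimes> h \<otimes> g = inv ?u \<otimes> (g \<otimes> (h \<otimes> ?u) \<otimes> inv g)"
      using g(1) hc by (simp add: inv_mult_group m_assoc)
    thus ?thesis using Hm[OF Hi[OF g(3)] nl[OF Hm[OF h g(3)]]] by simp
  qed
  let ?Q = "H \<union> (\<lambda>h. g \<otimes> h) ` H"
  have sub: "subgroup ?Q G"
  proof (rule subgroupI)
    show "?Q \<subseteq> carrier G" using Hc g(1) by auto
    show "?Q \<noteq> {}" using H1 by blast
  next
    fix a assume "a \<in> ?Q"
    then consider (h) "a \<in> H" | (gh) h where "h \<in> H" "a = g \<otimes> h" by blast
    thus "inv a \<in> ?Q"
    proof cases
      case h thus ?thesis using Hi by blast
    next
      case gh
      have hc: "h \<in> carrier G" using Hc[OF gh(1)] .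
      have "inv a = g \<otimes> ((inv g \<otimes> inv h \<otimes> g) \<otimes> inv ?u)"
        using gh(2) g(1) hc by (simp add: inv_mult_group m_assoc)
      moreover have "(inv g \<otimes> inv h \<otimes> g) \<otimes> inv ?u \<in> H"
        using Hm[OF nr[OF Hi[OF gh(1)]] Hi[OF g(3)]] .
      ultimately show ?thesis by blast
    qed
  next
    fix a b assume "a \<in> ?Q" "b \<in> ?Q"
    then consider (hh) "a \<in> H" "b \<in> H"
      | (hg) h2 where "a \<in> H" "h2 \<in> H" "b = g \<otimes> h2"
      | (gh) h1 where "h1 \<in> H" "a = g \<otimes> h1" "b \<in> H"
      | (gg) h1 h2 where "h1 \<in> H" "a = g \<otimes> h1" "h2 \<in> H" "b = g \<otimes> h2" by blast
    thus "a \<otimes> b \<in> ?Q"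
    proof cases
      case hh thus ?thesis using Hm by blast
    next
      case hg
      have c: "a \<in> carrier G" "h2 \<in> carrier G" using Hc hg by auto
      have "a \<otimes> b = g \<otimes> ((inv g \<otimes> a \<otimes> g) \<otimes> h2)" using hg(3) c g(1) by (simp add: m_assoc)
      moreover have "(inv g \<otimes> a \<otimes> g) \<otimes> h2 \<in> H" using Hm[OF nr[OF hg(1)] hg(2)] .
      ultimately show ?thesis by blast
    next
      case gh
      have c: "h1 \<in> carrier G" "b \<in> carrier G" using Hc gh by auto
      have "a \<otimes> b = g \<otimes> (h1 \<otimes> b)" using gh(2) c g(1) by (simp add: m_assoc)
      moreover have "h1 \<otimes> b \<in> H" using Hm[OF gh(1) gh(3)] .
      ultimately show ?thesis by blast
    next
      case gg
      have c: "h1 \<in> carrier G" "h2 \<in> carrier G" using Hc gg by auto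
      have "a \<otimes> b = ?u \<otimes> ((inv g \<otimes> h1 \<otimes> g) \<otimes> h2)" using gg(2,4) c g(1) by (simp add: m_assoc)
      moreover have "?u \<otimes> ((inv g \<otimes> h1 \<otimes> g) \<otimes> h2) \<in> H" using Hm[OF g(3) Hm[OF nr[OF gg(1)] gg(3)]] .
      ultimately show ?thesis by simp
    qed
  qed
  have disj: "H \<inter> (\<lambda>h. g \<otimes> h) ` H = {}"
  proof (rule ccontr)
    assume "H \<inter> (\<lambda>h. g \<otimes> h) ` H \<noteq> {}"
    then obtain h where h: "h \<in> H" "g \<otimes> h \<in> H" by blast
    have "g = (g \<otimes> h) \<otimes> inv h" using Hc[OF h(1)] g(1) by (simp add: m_assoc)
    hence "g \<in> H" using Hm[OF h(2) Hi[OF h(1)]] by simp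
    thus False using g(2) by simp
  qed
  have "inj_on (\<lambda>h. g \<otimes> h) H" using Hc g(1) by (auto simp: inj_on_def)
  hence cg: "card ((\<lambda>h. g \<otimes> h) ` H) = card H" by (simp add: card_image)
  have "card ?Q = card H + card ((\<lambda>h. g \<otimes> h) ` H)"
    using card_Un_disjoint[OF fH finite_imageI[OF fH] disj] .
  thus ?thesis using sub cg by simp
qed

lemma (in group) star_from_dihedral:
  assumes fin: "finite (carrier G)" and H: "subgroup H G" and cH: "card H = 2 ^ j"
    and n2: "n \<ge> 2" and hyp: "\<forall>P. is_sylow_subgroup 2 G P \<longrightarrow> G\<lparr>carrier := P\<rparr> \<cong> dihedral_group n"
    and noC: "\<not> (\<exists>C. is_p_subgroup 2 G C \<and> cyclic_group (subgroup_generated G C) \<and> H \<noteq> {\<one>} \<and> H \<subset> C)"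
    and g: "g \<in> carrier G" "g \<notin> H" "g \<otimes> g \<in> H" "\<forall>h\<in>H. g \<otimes> h \<otimes> inv g \<in> H"
  shows "\<exists>h\<in>H. (g \<otimes> h) \<otimes> (g \<otimes> h) = \<one>"
proof (cases "H = {\<one>}")
  case True
  thus ?thesis using g by auto
next
  case False
  have fH: "finite H" using finite_subset[OF subgroup.subset[OF H] fin] .
  define Q where "Q = H \<union> (\<lambda>h. g \<otimes> h) ` H"
  have Q: "subgroup Q G" "card Q = 2 ^ Suc j"
    using ext_subgroup[OF H fH g] cH unfolding Q_def by auto
  obtain P0 k where P0: "subgroup P0 G" "card P0 = 2 ^ k" "\<not> 2 ^ Suc k dvd order G"
    using sylow_exists[OF fin] by blast
  obtain P' where P': "subgroup P' G" "card P' = card P0" "Q \<subseteq> P'"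
    using sylow_contains[OF fin Q P0] by blast
  have "card (rcosets P0) * card P0 = order G" by (rule lagrange[OF P0(1)])
  hence "2 ^ k dvd order G" using P0(2) by (metis dvd_triv_right)
  hence "is_sylow_subgroup 2 G P'" unfolding is_sylow_subgroup_def using P' P0 by auto
  hence "G\<lparr>carrier := P'\<rparr> \<cong> dihedral_group n" using hyp by blast
  then obtain \<phi> where phi: "\<phi> \<in> iso (G\<lparr>carrier := P'\<rparr>) (dihedral_group n)" unfolding is_iso_def by blast
  have HP: "H \<subseteq> P'" using P'(3) unfolding Q_def by blast
  have gP: "g \<in> P'"
  proof -
    have "g \<otimes> \<one> \<in> Q" unfolding Q_def using subgroup.one_closed[OF H] by blast
    thus ?thesis using P'(3) g(1) by auto
  qed
  have cP': "card P' = 2 ^ k" using P'(2) P0(2) by simp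
  show ?thesis by (rule dihedral_case[OF P'(1) cP' phi n2 H HP gP g(2) noC False])
qed


theorem corollary3p7:
  fixes G :: "('a, 'b) monoid_scheme" and H :: "'a set"
  assumes "group G" and "finite (carrier G)"
    and "\<exists>n::nat. n \<ge> 2 \<and>
           (\<forall>P. is_sylow_subgroup 2 G P \<longrightarrow> G\<lparr>carrier := P\<rparr> \<cong> dihedral_group n)"
    and "is_p_subgroup 2 G H"
  shows "\<not> subgroup_perfect_code G H \<longleftrightarrow>
         (\<exists>C. is_p_subgroup 2 G C \<and> cyclic_group (subgroup_generated G C) \<and>
              H \<noteq> {\<one>\<^bsub>G\<^esub>} \<and> H \<subset> C)"
proof -
  interpret group G by (rule assms(1))
  have fin: "finite (carrier G)" by (rule assms(2))
  obtain n where n: "n \<ge> 2" "\<forall>P. is_sylow_subgroup 2 G P \<longrightarrow> G\<lparr>carrier := P\<rparr> \<cong> dihedral_group n"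
    using assms(3) by blast
  obtain j where H: "subgroup H G" and cH: "card H = 2 ^ j"
    using assms(4) unfolding is_p_subgroup_def by blast
  show ?thesis
  proof
    assume npc: "\<not> subgroup_perfect_code G H"
    show "\<exists>C. is_p_subgroup 2 G C \<and> cyclic_group (subgroup_generated G C) \<and> H \<noteq> {\<one>\<^bsub>G\<^esub>} \<and> H \<subset> C"
    proof (rule ccontr)
      assume noC: "\<not> (\<exists>C. is_p_subgroup 2 G C \<and> cyclic_group (subgroup_generated G C) \<and> H \<noteq> {\<one>\<^bsub>G\<^esub>} \<and> H \<subset> C)"
      have "subgroup_perfect_code G H"
        by (rule perfect_code_crit[OF H fin cH star_from_dihedral[OF fin H cH n(1) n(2) noC]])
      with npc show False by simp
    qed
  next
    assume "\<exists>C. is_p_subgroup 2 G C \<and> cyclic_group (subgroup_generated G C) \<and> H \<noteq> {\<one>\<^bsub>G\<^esub>} \<and> H \<subset> C"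
    then obtain C where C: "is_p_subgroup 2 G C" "cyclic_group (subgroup_generated G C)" "H \<noteq> {\<one>\<^bsub>G\<^esub>}" "H \<subset> C"
      by blast
    obtain m where Cs: "subgroup C G" "card C = 2 ^ m" using C(1) unfolding is_p_subgroup_def by blast
    show "\<not> subgroup_perfect_code G H" by (rule cyclic_not_pc[OF fin H Cs C(2) C(3) C(4)])
  qed
qed

end
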